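(* Let $\zeta_5=\exp(2\pi i/5)$, $K=\mathbb{Q}(\zeta_5)\subset\mathbb{C}$, $\mathcal{O}_K=\mathbb{Z}[\zeta_5]$, let $\sigma:K\to\mathbb{C}$ be the embedding with $\sigma(\zeta_5)=\zeta_5^2$, and let $\mathcal{S}=\{z\in\mathcal{O}_K : |\sigma(z)|\le 1\}$. If $z_1,z_2\in\mathcal{S}$ with $z_1\neq z_2$, then $|z_1-z_2|\ge\frac{\sqrt5-1}{2}$.
   Context: Elements of $K$ are regarded as complex numbers via the inclusion $K\subset\mathbb{C}$. *)

theory Defs
  imports Complex_Main
begin

definition zeta5 :: complex where
  "zeta5 = exp (2 * of_real pi * \<i> / 5)"

text \<open>Elements of O_K = Z[zeta5], written in the integral basis 1, zeta5, zeta5^2, zeta5^3.\<close>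
definition OK_elem :: "(nat \<Rightarrow> int) \<Rightarrow> complex" where
  "OK_elem a = (\<Sum>i<4. of_int (a i) * zeta5 ^ i)"

definition sigma_elem :: "(nat \<Rightarrow> int) \<Rightarrow> complex" where
  "sigma_elem a = (\<Sum>i<4. of_int (a i) * (zeta5 ^ 2) ^ i)"

definition OK :: "complex set" where
  "OK = range OK_elem"

definition S_set :: "complex set" where
  "S_set = {z. \<exists>a. z = OK_elem a \<and> cmod (sigma_elem a) \<le> 1}"

end

theory Submission imports Defs begin

lemma z_cis: "zeta5 = cis (2*pi/5)"
  unfolding zeta5_def by (simp add: cis_conv_exp mult.commute)

lemma z5: "zeta5 ^ 5 = 1"
  unfolding z_cis DeMoivre by simp

lemma znorm: "cmod zeta5 = 1" unfolding z_cis by simp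

lemma zcnj: "cnj zeta5 = zeta5 ^ 4"
proof -
  have "zeta5 * cnj zeta5 = 1" using complex_norm_square[of zeta5] znorm by simp
  moreover have "zeta5 * zeta5^4 = 1" using z5 by (simp add: power_Suc[symmetric] del: power_Suc)
  ultimately show ?thesis
    by (metis mult.left_commute mult.right_neutral mult.commute)
qed

lemma zRe: "Re zeta5 = cos (2*pi/5)" unfolding z_cis by simp

lemma cospos: "0 < cos (2*pi/5)" using pi_gt_zero by (intro cos_gt_zero_pi) linarith+

lemma cosless: "cos (2*pi/5) < 1"
proof -
  have "cos (2*pi/5) < cos 0" by (rule cos_monotone_0_pi) auto
  thus ?thesis by simp
qed

lemma zne1: "zeta5 \<noteq> 1" using zRe cosless by auto

lemma zsum: "1 + zeta5 + zeta5^2 + zeta5^3 + zeta5^4 = 0"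
proof -
  have "(zeta5 - 1) * (1 + zeta5 + zeta5^2 + zeta5^3 + zeta5^4) = zeta5^5 - 1"
    by algebra
  thus ?thesis using z5 zne1 by simp
qed

definition r :: real where "r = (sqrt 5 - 1)/2"

lemma zt: "zeta5 + zeta5^4 = of_real r"
proof -
  define t where "t = 2 * cos (2*pi/5)"
  have "zeta5 + zeta5^4 = zeta5 + cnj zeta5" by (simp add: zcnj)
  also have "\<dots> = of_real t" unfolding t_def using zRe complex_add_cnj by simp
  finally have e: "zeta5 + zeta5^4 = of_real t" .
  have "(zeta5 + zeta5^4)^2 + (zeta5 + zeta5^4) - 1 = 0"
  proof -
    have "(zeta5 + zeta5^4)^2 + (zeta5 + zeta5^4) - 1 = (1 + zeta5 + zeta5^2 + zeta5^3 + zeta5^4) + zeta5^3*(zeta5^5 - 1) + 2*(zeta5^5-1)"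
      by algebra
    thus ?thesis using z5 zsum by simp
  qed
  hence "of_real (t^2 + t - 1) = (0::complex)" using e by simp
  hence q: "t^2 + t - 1 = 0" by (simp only: of_real_eq_0_iff)
  have tp: "t > 0" using cospos t_def by simp
  have rq: "r^2 + r - 1 = 0" unfolding r_def by (simp add: power2_eq_square field_simps)
  have rp: "r > 0" unfolding r_def by (simp add: real_less_rsqrt)
  have "(t - r) * (t + r + 1) = 0" using q rq by (simp add: algebra_simps power2_eq_square)
  hence "t = r" using tp rp by (smt (verit) mult_eq_0_iff)
  thus ?thesis using e by simp
qed

lemma zs: "zeta5^2 + zeta5^3 = of_real (-1 - r)"
proof -
  have "zeta5^2 + zeta5^3 = (1 + zeta5 + zeta5^2 + zeta5^3 + zeta5^4) - 1 - (zeta5 + zeta5^4)" by simp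
  thus ?thesis using zsum zt by simp
qed

lemma poly_id:
  fixes w x0 x1 x2 x3 :: complex
  shows "(x0 + x1*w + x2*w^2 + x3*w^3) * (x0 + x1*w^4 + x2*w^3 + x3*w^2)
    = (x0^2+x1^2+x2^2+x3^2) + (x0*x1+x1*x2+x2*x3)*(w+w^4) + (x0*x2+x1*x3+x0*x3)*(w^2+w^3)
      + (w^5-1)*(x1^2+x2^2+x3^2 + (x1*x2+x2*x3)*w + x1*x3*w^2)"
  by (simp add: algebra_simps power2_eq_square eval_nat_numeral)

lemma norm_gen:
  fixes u :: complex and a :: "nat \<Rightarrow> int"
  assumes "u^5 = 1" "cnj u = u^4"
  shows "complex_of_real ((cmod (\<Sum>i<4. of_int (a i) * u ^ i))^2) =
    of_int (a 0^2 + a 1^2 + a 2^2 + a 3^2) + of_int (a 0*a 1 + a 1*a 2 + a 2*a 3) * (u+u^4)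
   + of_int (a 0*a 2 + a 1*a 3 + a 0*a 3) * (u^2+u^3)"
proof -
  have c: "cnj (\<Sum>i<4. of_int (a i) * u ^ i) = of_int (a 0) + of_int (a 1) * u^4 + of_int (a 2) * u^3 + of_int (a 3) * u^2"
  proof -
    have "cnj (\<Sum>i<4. of_int (a i) * u ^ i) = of_int (a 0) + of_int (a 1) * u^4 + of_int (a 2) * (u^4)^2 + of_int (a 3) * (u^4)^3"
      by (simp add: eval_nat_numeral assms(2))
    also have "(u^4)^2 = u^5 * u^3" by (simp add: power_add[symmetric] power_mult[symmetric])
    also have "(u^4)^3 = u^5 * u^5 * u^2" by (simp add: power_add[symmetric] power_mult[symmetric])
    finally show ?thesis using assms(1) by simp
  qed
  have o: "(\<Sum>i<4. of_int (a i) * u ^ i) = of_int (a 0) + of_int (a 1) * u + of_int (a 2) * u^2 + of_int (a 3) * u^3"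
    by (simp add: eval_nat_numeral)
  have "complex_of_real ((cmod (\<Sum>i<4. of_int (a i) * u ^ i))^2) = (\<Sum>i<4. of_int (a i) * u ^ i) * cnj (\<Sum>i<4. of_int (a i) * u ^ i)"
    by (rule complex_norm_square)
  also have "\<dots> = (of_int (a 0) + of_int (a 1) * u + of_int (a 2) * u^2 + of_int (a 3) * u^3) * (of_int (a 0) + of_int (a 1) * u^4 + of_int (a 2) * u^3 + of_int (a 3) * u^2)"
    unfolding c unfolding o by (rule refl)
  also have "\<dots> = of_int (a 0^2 + a 1^2 + a 2^2 + a 3^2) + of_int (a 0*a 1 + a 1*a 2 + a 2*a 3) * (u+u^4)
   + of_int (a 0*a 2 + a 1*a 3 + a 0*a 3) * (u^2+u^3)"
    unfolding poly_id using assms(1) by simp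
  finally show ?thesis .
qed

lemma r_bounds: "1/2 < r" "r < 1" "r^2 = 1 - r"
proof -
  have "2 < sqrt 5" by (rule real_less_rsqrt) simp
  moreover have "sqrt 5 < 3" by (rule real_less_lsqrt) auto
  ultimately show "1/2 < r" "r < 1" unfolding r_def by auto
  show "r^2 = 1 - r" unfolding r_def by (simp add: power2_eq_square field_simps)
qed

lemma int_part:
  fixes m n :: int
  assumes A: "m + n * r > 0" and B0: "real_of_int m - real_of_int n - n * r \<ge> 0" and B4: "real_of_int m - real_of_int n - n * r \<le> 4"
  shows "m + n * r \<ge> 1 - r"
proof (rule ccontr)
  assume c: "\<not> ?thesis"
  note rb = r_bounds
  have d: "(m + n*r) - (real_of_int m - real_of_int n - n*r) = n * (1 + 2*r)" by (simp add: algebra_simps)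
  have d2: "n * (1 + 2*r) = n + 2*(n*r)" by (simp add: algebra_simps)
  have n1: "n \<le> 0"
  proof (rule ccontr)
    assume "\<not> n \<le> 0" hence "real_of_int n \<ge> 1" by simp
    hence "n * (1+2*r) \<ge> 1 * (1+2*r)" using rb by (intro mult_right_mono) auto
    thus False using d c B0 rb by (simp add: algebra_simps)
  qed
  have n2: "n \<ge> -1"
  proof (rule ccontr)
    assume "\<not> n \<ge> -1" hence "real_of_int n \<le> -2" by simp
    hence "n * (1+2*r) \<le> -2 * (1+2*r)" using rb by (intro mult_right_mono) auto
    thus False using d A B4 rb by (simp add: algebra_simps)
  qed
  have "n = 0 \<or> n = -1" using n1 n2 by auto
  thus False
  proof
    assume "n = 0" thus False using A c rb by simp
  next
    assume n: "n = -1"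
    hence "m > 0" using A rb by simp
    hence "real_of_int m \<ge> 1" by simp
    thus False using c n by simp
  qed
qed

theorem mainTheorem3:
  assumes "z1 \<in> S_set" and "z2 \<in> S_set" and "z1 \<noteq> z2"
  shows "cmod (z1 - z2) \<ge> (sqrt 5 - 1) / 2"
proof -
  obtain a where a: "z1 = OK_elem a" "cmod (sigma_elem a) \<le> 1" using assms(1) unfolding S_set_def by auto
  obtain b where b: "z2 = OK_elem b" "cmod (sigma_elem b) \<le> 1" using assms(2) unfolding S_set_def by auto
  define c where "c = (\<lambda>i. a i - b i)"
  have zc: "z1 - z2 = OK_elem c"
    unfolding a b c_def OK_elem_def by (simp add: sum_subtractf[symmetric] algebra_simps)
  have sc: "sigma_elem a - sigma_elem b = sigma_elem c"
    unfolding c_def sigma_elem_def by (simp add: sum_subtractf[symmetric] algebra_simps)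
  have s2: "cmod (sigma_elem c) \<le> 2"
    using norm_triangle_ineq4[of "sigma_elem a" "sigma_elem b"] a b sc by simp
  have z2p: "(zeta5^2)^5 = 1" using z5 by (metis power_mult mult.commute power_one)
  have z2c: "cnj (zeta5^2) = (zeta5^2)^4" by (simp add: zcnj power_mult[symmetric])
  have e1: "(zeta5^2) + (zeta5^2)^4 = of_real (-1-r)"
  proof -
    have "(zeta5^2)^4 = zeta5^5 * zeta5^3" by (simp add: eval_nat_numeral)
    thus ?thesis using z5 zs by simp
  qed
  have e2: "(zeta5^2)^2 + (zeta5^2)^3 = of_real r"
  proof -
    have "(zeta5^2)^3 = zeta5^5 * zeta5" by (simp add: eval_nat_numeral)
    moreover have "(zeta5^2)^2 = zeta5^4" by (simp add: power_mult[symmetric])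
    ultimately show ?thesis using z5 zt by (simp add: add.commute)
  qed
  define Q where "Q = c 0^2 + c 1^2 + c 2^2 + c 3^2"
  define p where "p = c 0*c 1 + c 1*c 2 + c 2*c 3"
  define q where "q = c 0*c 2 + c 1*c 3 + c 0*c 3"
  have "complex_of_real ((cmod (OK_elem c))^2) = of_real (Q + p * r + q * (-1-r))"
    using norm_gen[OF z5 zcnj, of c] zt zs unfolding OK_elem_def Q_def p_def q_def by simp
  hence A: "(cmod (OK_elem c))^2 = (Q - q) + (p - q) * r"
    by (simp only: of_real_eq_iff) (simp add: algebra_simps)
  have "complex_of_real ((cmod (sigma_elem c))^2) = of_real (Q + p * (-1-r) + q * r)"
    using norm_gen[OF z2p z2c, of c] e1 e2 unfolding sigma_elem_def Q_def p_def q_def by simp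
  hence B: "(cmod (sigma_elem c))^2 = real_of_int (Q - q) - real_of_int (p - q) - real_of_int (p - q) * r"
    by (simp only: of_real_eq_iff) (simp add: algebra_simps)
  have "OK_elem c \<noteq> 0" using zc assms(3) by (metis right_minus_eq)
  hence Ap: "(cmod (OK_elem c))^2 > 0" by simp
  have B4: "(cmod (sigma_elem c))^2 \<le> 4"
    using s2 power_mono[OF s2, of 2] by simp
  have "real_of_int (Q - q) + real_of_int (p - q) * r \<ge> 1 - r"
    apply (rule int_part)
    apply (subst A[symmetric], rule Ap)
    apply (subst B[symmetric], rule zero_le_power2)
    apply (subst B[symmetric], rule B4)
    done
  hence "(cmod (OK_elem c))^2 \<ge> r^2" using A r_bounds(3) by linarith
  hence "cmod (OK_elem c) \<ge> r" by (rule power2_le_imp_le) simp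
  thus ?thesis using zc by (metis r_def)
qed

end
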